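(* Let $S$ be a finitely generated semigroup and let $A$ and $B$ be finite generating sets for $S$. Then $\Omega\Gamma_r(S,A)$ is isomorphic, as a partially ordered set, to $\Omega\Gamma_r(S,B)$.
   Context: A digraph on a set $\Omega$ is a subset $\Gamma\subseteq\Omega\times\Omega$. A path is a finite or infinite sequence of pairwise distinct vertices $(v_0,v_1,\ldots)$ with $(v_i,v_{i+1})\in\Gamma$ for all $i$ (a single vertex is a path of length 0); a ray is an infinite path; an anti-ray is an infinite sequence of pairwise distinct vertices with $(v_{i+1},v_i)\in\Gamma$ for all $i$. For infinite $\Sigma',\Sigma\subseteq\Omega$, write $\Sigma'\preccurlyeq\Sigma$ if there are infinitely many pairwise vertex-disjoint paths each with initial vertex in $\Sigma'$ and final vertex in $\Sigma$. Restricted to rays and anti-rays of $\Gamma$ (identified with their vertex sets), $\preccurlyeq$ is a preorder; $\mathbf{r}\approx\mathbf{r}'$ iff $\mathbf{r}\preccurlyeq\mathbf{r}'$ and $\mathbf{r}'\preccurlyeq\mathbf{r}$. The ends of $\Gamma$ are the $\approx$-classes of rays and anti-rays, and $\Omega\Gamma$ is the set of ends partially ordered by the order induced by $\preccurlyeq$. The right Cayley graph $\Gamma_r(S,A)$ is the digraph on $S$ with edges $(x,xa)$, $x\in S$, $a\in A$. *)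

theory Defs
  imports Main
begin

definition is_path :: "('v \<times> 'v) set \<Rightarrow> 'v list \<Rightarrow> bool" where
  "is_path \<Gamma> p \<longleftrightarrow> p \<noteq> [] \<and> distinct p \<and> (\<forall>i. Suc i < length p \<longrightarrow> (p ! i, p ! Suc i) \<in> \<Gamma>)"

definition is_ray :: "('v \<times> 'v) set \<Rightarrow> (nat \<Rightarrow> 'v) \<Rightarrow> bool" where
  "is_ray \<Gamma> r \<longleftrightarrow> inj r \<and> (\<forall>i. (r i, r (Suc i)) \<in> \<Gamma>)"

definition is_antiray :: "('v \<times> 'v) set \<Rightarrow> (nat \<Rightarrow> 'v) \<Rightarrow> bool" where
  "is_antiray \<Gamma> r \<longleftrightarrow> inj r \<and> (\<forall>i. (r (Suc i), r i) \<in> \<Gamma>)"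

definition reach_le :: "('v \<times> 'v) set \<Rightarrow> 'v set \<Rightarrow> 'v set \<Rightarrow> bool" where
  "reach_le \<Gamma> X Y \<longleftrightarrow> (\<exists>P. infinite P \<and>
      (\<forall>p\<in>P. is_path \<Gamma> p \<and> hd p \<in> X \<and> last p \<in> Y) \<and>
      (\<forall>p\<in>P. \<forall>q\<in>P. p \<noteq> q \<longrightarrow> set p \<inter> set q = {}))"

definition ray_sets :: "('v \<times> 'v) set \<Rightarrow> 'v set set" where
  "ray_sets \<Gamma> = {range r | r. is_ray \<Gamma> r \<or> is_antiray \<Gamma> r}"

definition end_equiv :: "('v \<times> 'v) set \<Rightarrow> 'v set \<Rightarrow> 'v set \<Rightarrow> bool" where
  "end_equiv \<Gamma> X Y \<longleftrightarrow> reach_le \<Gamma> X Y \<and> reach_le \<Gamma> Y X"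

definition ends :: "('v \<times> 'v) set \<Rightarrow> 'v set set set" where
  "ends \<Gamma> = (\<lambda>X. {Y \<in> ray_sets \<Gamma>. end_equiv \<Gamma> X Y}) ` ray_sets \<Gamma>"

definition end_le :: "('v \<times> 'v) set \<Rightarrow> 'v set set \<Rightarrow> 'v set set \<Rightarrow> bool" where
  "end_le \<Gamma> E F \<longleftrightarrow> (\<exists>X\<in>E. \<exists>Y\<in>F. reach_le \<Gamma> X Y)"

definition end_poset_iso :: "('v \<times> 'v) set \<Rightarrow> ('w \<times> 'w) set \<Rightarrow> bool" where
  "end_poset_iso \<Gamma> \<Delta> \<longleftrightarrow> (\<exists>f. bij_betw f (ends \<Gamma>) (ends \<Delta>) \<and>
      (\<forall>E\<in>ends \<Gamma>. \<forall>F\<in>ends \<Gamma>. end_le \<Gamma> E F \<longleftrightarrow> end_le \<Delta> (f E) (f F)))"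

text \<open>Right Cayley graph of the semigroup (the whole type) with respect to A.\<close>
definition cayley_r :: "'a::semigroup_mult set \<Rightarrow> ('a \<times> 'a) set" where
  "cayley_r A = {(x, x * a) | x a. a \<in> A}"

inductive_set sgen :: "'a::semigroup_mult set \<Rightarrow> 'a set" for A where
  base: "a \<in> A \<Longrightarrow> a \<in> sgen A"
| mult: "x \<in> sgen A \<Longrightarrow> y \<in> sgen A \<Longrightarrow> x * y \<in> sgen A"

end

theory Submission
  imports Defs "HOL-Library.Infinite_Set"
begin


lemma path_rtrancl:
  assumes "is_path G p" "set p \<subseteq> S"
  shows "(hd p, last p) \<in> (G \<inter> S \<times> S)\<^sup>*"
proof -
  have ne: "p \<noteq> []" using assms(1) unfolding is_path_def by auto
  have "\<forall>k. k < length p \<longrightarrow> (p!0, p!k) \<in> (G \<inter> S \<times> S)\<^sup>*"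
  proof (intro allI impI)
    fix k assume "k < length p"
    then show "(p!0, p!k) \<in> (G \<inter> S \<times> S)\<^sup>*"
    proof (induction k)
      case 0 then show ?case by simp
    next
      case (Suc k)
      have e: "(p!k, p!Suc k) \<in> G" using assms(1) Suc.prems unfolding is_path_def by auto
      have "p!k \<in> S" "p!Suc k \<in> S" using assms(2) Suc.prems nth_mem[of k p] nth_mem[of "Suc k" p] by auto
      have ih: "(p!0, p!k) \<in> (G \<inter> S \<times> S)\<^sup>*" using Suc.IH Suc.prems by simp
      have "(p!k, p!Suc k) \<in> G \<inter> S \<times> S" using e \<open>p!k \<in> S\<close> \<open>p!Suc k \<in> S\<close> by simp
      with ih show ?case by (rule rtrancl_into_rtrancl)
    qed
  qed
  then have "(p!0, p!(length p - 1)) \<in> (G \<inter> S \<times> S)\<^sup>*" using ne by simp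
  then show ?thesis using ne by (simp add: hd_conv_nth last_conv_nth)
qed

lemma rtrancl_path:
  assumes "(x, z) \<in> (G \<inter> S \<times> S)\<^sup>*" "x \<in> S"
  shows "\<exists>p. is_path G p \<and> hd p = x \<and> last p = z \<and> set p \<subseteq> S"
  using assms(1)
proof (induction rule: rtrancl_induct)
  case base
  show ?case using assms(2) by (intro exI[of _ "[x]"]) (auto simp: is_path_def)
next
  case (step y z)
  then obtain p where p: "is_path G p" "hd p = x" "last p = y" "set p \<subseteq> S" by blast
  have ne: "p \<noteq> []" using p unfolding is_path_def by auto
  show ?case
  proof (cases "z \<in> set p")
    case True
    then obtain i where i: "i < length p" "p!i = z" by (auto simp: in_set_conv_nth)
    let ?q = "take (Suc i) p"
    have "is_path G ?q" using p(1) i unfolding is_path_def by auto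
    moreover have "hd ?q = x" using p(2) ne by (simp add: hd_take)
    moreover have "last ?q = z" using i by (simp add: take_Suc_conv_app_nth)
    moreover have "set ?q \<subseteq> S" using set_take_subset[of "Suc i" p] p(4) by (rule order_trans)
    ultimately show ?thesis by blast
  next
    case False
    let ?q = "p @ [z]"
    have "is_path G ?q"
      unfolding is_path_def
    proof (intro conjI allI impI)
      show "?q \<noteq> []" by simp
      show "distinct ?q" using False p(1) unfolding is_path_def by auto
      fix i assume "Suc i < length ?q"
      then consider "Suc i < length p" | "Suc i = length p" by fastforce
      then show "(?q!i, ?q!Suc i) \<in> G"
      proof cases
        case 1 then show ?thesis using p(1) unfolding is_path_def by (simp add: nth_append)
      next
        case 2
        then have "i = length p - 1" by simp
        then have "?q!i = last p" using ne by (simp add: nth_append last_conv_nth)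
        moreover have "?q!Suc i = z" using 2 by (simp add: nth_append)
        ultimately show ?thesis using p(3) step(2) by simp
      qed
    qed
    moreover have "hd ?q = x" using p(2) ne by simp
    moreover have "set ?q \<subseteq> S" using p(4) step(2) by auto
    moreover have "last ?q = z" by simp
    ultimately show ?thesis by blast
  qed
qed

definition avoid_reach :: "('v \<times> 'v) set \<Rightarrow> 'v set \<Rightarrow> 'v set \<Rightarrow> bool" where
  "avoid_reach G X Y \<longleftrightarrow> (\<forall>F. finite F \<longrightarrow> (\<exists>p. is_path G p \<and> hd p \<in> X \<and> last p \<in> Y \<and> set p \<inter> F = {}))"

lemma reach_le_avoid: "reach_le G X Y \<Longrightarrow> avoid_reach G X Y"
  unfolding avoid_reach_def
proof (intro allI impI)
  fix F :: "'a set" assume fin: "finite F" and "reach_le G X Y"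
  then obtain P where P: "infinite P" "\<forall>p\<in>P. is_path G p \<and> hd p \<in> X \<and> last p \<in> Y"
    "\<forall>p\<in>P. \<forall>q\<in>P. p \<noteq> q \<longrightarrow> set p \<inter> set q = {}" unfolding reach_le_def by blast
  have sub: "{p\<in>P. set p \<inter> F \<noteq> {}} \<subseteq> (\<Union>x\<in>F. {p\<in>P. x \<in> set p})" by auto
  have "finite {p\<in>P. x \<in> set p}" for x
  proof (cases "\<exists>p\<in>P. x \<in> set p")
    case True
    then obtain p where "p \<in> P" "x \<in> set p" by blast
    then have "{p\<in>P. x \<in> set p} \<subseteq> {p}" using P(3) by blast
    then show ?thesis using finite_subset by blast
  next
    case False then have "{p\<in>P. x \<in> set p} = {}" by auto
    then show ?thesis by (metis finite.emptyI)
  qed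
  then have "finite (\<Union>x\<in>F. {p\<in>P. x \<in> set p})" using fin by blast
  then have "finite {p\<in>P. set p \<inter> F \<noteq> {}}" using sub by (rule finite_subset[rotated])
  then have "infinite (P - {p\<in>P. set p \<inter> F \<noteq> {}})" using P(1) by simp
  then obtain p where "p \<in> P - {p\<in>P. set p \<inter> F \<noteq> {}}" by (metis ex_in_conv finite.emptyI)
  then have "p \<in> P" "set p \<inter> F = {}" by auto
  then show "\<exists>p. is_path G p \<and> hd p \<in> X \<and> last p \<in> Y \<and> set p \<inter> F = {}" using P(2) by blast
qed

lemma avoid_reach_le:
  assumes "avoid_reach G X Y" shows "reach_le G X Y"
proof -
  define ok where "ok = (\<lambda>U p. is_path G p \<and> hd p \<in> X \<and> last p \<in> Y \<and> set p \<inter> U = {})"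
  define pick where "pick = (\<lambda>U. SOME p. ok U p)"
  have pk: "ok U (pick U)" if "finite U" for U
  proof -
    have "\<exists>p. ok U p" using assms that unfolding avoid_reach_def ok_def by blast
    then show ?thesis unfolding pick_def by (rule someI_ex)
  qed
  define U where "U = rec_nat {} (\<lambda>_ V. V \<union> set (pick V))"
  have U0: "U 0 = {}" and US: "U (Suc n) = U n \<union> set (pick (U n))" for n by (simp_all add: U_def)
  have finU: "finite (U n)" for n by (induction n) (simp_all add: U0 US)
  have okn: "ok (U n) (pick (U n))" for n using pk finU by blast
  have mono: "m \<le> n \<Longrightarrow> U m \<subseteq> U n" for m n
    by (induction n) (auto simp: US le_Suc_eq)
  have disj: "m < n \<Longrightarrow> set (pick (U m)) \<inter> set (pick (U n)) = {}" for m n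
  proof -
    assume "m < n"
    then have "set (pick (U m)) \<subseteq> U n" using mono[of "Suc m" n] US by auto
    then show ?thesis using okn[of n] unfolding ok_def by auto
  qed
  have ne: "pick (U n) \<noteq> []" for n using okn[of n] unfolding ok_def is_path_def by auto
  have inj: "inj (\<lambda>n. pick (U n))"
  proof (rule injI)
    fix m n assume eq: "pick (U m) = pick (U n)"
    show "m = n"
    proof (rule ccontr)
      assume "m \<noteq> n"
      then have "set (pick (U m)) \<inter> set (pick (U n)) = {}" using disj[of m n] disj[of n m] by (auto simp: neq_iff)
      then show False using eq ne[of n] by auto
    qed
  qed
  show ?thesis unfolding reach_le_def
  proof (intro exI[of _ "range (\<lambda>n. pick (U n))"] conjI)
    show "infinite (range (\<lambda>n. pick (U n)))" using inj by (simp add: range_inj_infinite)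
    show "\<forall>p\<in>range (\<lambda>n. pick (U n)). is_path G p \<and> hd p \<in> X \<and> last p \<in> Y" using okn unfolding ok_def by auto
    show "\<forall>p\<in>range (\<lambda>n. pick (U n)). \<forall>q\<in>range (\<lambda>n. pick (U n)). p \<noteq> q \<longrightarrow> set p \<inter> set q = {}"
    proof (intro ballI impI)
      fix p q assume "p \<in> range (\<lambda>n. pick (U n))" "q \<in> range (\<lambda>n. pick (U n))" "p \<noteq> q"
      then obtain m n where mn: "p = pick (U m)" "q = pick (U n)" "m \<noteq> n" by blast
      then consider "m < n" | "n < m" by linarith
      then show "set p \<inter> set q = {}"
      proof cases
        case 1 then show ?thesis using disj mn by blast
      next
        case 2 then show ?thesis using disj[of n m] mn by blast
      qed
    qed
  qed
qed

lemma reach_le_avoidE: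
  assumes "reach_le G X Y" "finite F"
  shows "\<exists>p. is_path G p \<and> hd p \<in> X \<and> last p \<in> Y \<and> set p \<inter> F = {}"
proof -
  have "\<forall>F. finite F \<longrightarrow> (\<exists>p. is_path G p \<and> hd p \<in> X \<and> last p \<in> Y \<and> set p \<inter> F = {})"
    using reach_le_avoid[OF assms(1)] unfolding avoid_reach_def .
  then show ?thesis using assms(2) by blast
qed

lemma reach_le_iff: "reach_le G X Y \<longleftrightarrow> avoid_reach G X Y"
  using reach_le_avoid avoid_reach_le by blast



lemma path_rev: assumes "is_path G p" shows "is_path (G\<inverse>) (rev p)"
  unfolding is_path_def
proof (intro conjI allI impI)
  show "rev p \<noteq> []" "distinct (rev p)" using assms unfolding is_path_def by auto
  fix i assume i: "Suc i < length (rev p)"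
  define j where "j = length p - Suc (Suc i)"
  have j: "Suc j < length p" "Suc j = length p - Suc i" using i by (auto simp: j_def)
  have "(p!j, p!Suc j) \<in> G" using assms j(1) unfolding is_path_def by auto
  moreover have "rev p ! i = p ! Suc j" using i j by (simp add: rev_nth)
  moreover have "rev p ! Suc i = p ! j" using i j by (simp add: rev_nth j_def)
  ultimately show "(rev p ! i, rev p ! Suc i) \<in> G\<inverse>" by simp
qed

lemma avoid_conv: "avoid_reach G X Y \<Longrightarrow> avoid_reach (G\<inverse>) Y X"
  unfolding avoid_reach_def
proof (intro allI impI)
  fix F :: "'a set" assume "\<forall>F. finite F \<longrightarrow> (\<exists>p. is_path G p \<and> hd p \<in> X \<and> last p \<in> Y \<and> set p \<inter> F = {})" "finite F"
  then obtain p where p: "is_path G p" "hd p \<in> X" "last p \<in> Y" "set p \<inter> F = {}" by blast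
  then have ne: "p \<noteq> []" unfolding is_path_def by auto
  show "\<exists>p. is_path (G\<inverse>) p \<and> hd p \<in> Y \<and> last p \<in> X \<and> set p \<inter> F = {}"
    using p ne path_rev[OF p(1)] by (intro exI[of _ "rev p"]) (simp add: hd_rev last_rev)
qed

lemma reach_conv: "reach_le (G\<inverse>) Y X \<longleftrightarrow> reach_le G X Y"
  using avoid_conv[of G X Y] avoid_conv[of "G\<inverse>" Y X] by (auto simp: reach_le_iff)

lemma trans_ray:
  assumes y: "is_ray G y" and r1: "reach_le G X (range y)" and r2: "reach_le G (range y) Z"
  shows "reach_le G X Z"
  unfolding reach_le_iff avoid_reach_def
proof (intro allI impI)
  fix F :: "'a set" assume fin: "finite F"
  have iy: "inj y" using y unfolding is_ray_def by auto
  have "finite (y -` F)" using fin iy by (simp add: finite_vimageI)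
  then obtain N where "y -` F \<subseteq> {..<N}" using finite_nat_bounded by blast
  then have N: "\<forall>n\<in>y -` F. n < N" by auto
  have finN: "finite (F \<union> y ` {..<N})" using fin by simp
  obtain p1 where p1: "is_path G p1" "hd p1 \<in> X" "last p1 \<in> range y" "set p1 \<inter> (F \<union> y ` {..<N}) = {}"
    using reach_le_avoidE[OF r1 finN] by blast
  have ne1: "p1 \<noteq> []" using p1 unfolding is_path_def by auto
  obtain n where n: "last p1 = y n" using p1(3) by blast
  have nN: "N \<le> n"
  proof (rule ccontr)
    assume "\<not> N \<le> n"
    then have "y n \<in> y ` {..<N}" by auto
    moreover have "y n \<in> set p1"
    proof -
      have "last p1 \<in> set p1" using ne1 by (rule last_in_set)
      then show ?thesis using n by simp
    qed
    ultimately show False using p1(4) by blast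
  qed
  have finn: "finite (F \<union> y ` {..<n})" using fin by simp
  obtain p2 where p2: "is_path G p2" "hd p2 \<in> range y" "last p2 \<in> Z" "set p2 \<inter> (F \<union> y ` {..<n}) = {}"
    using reach_le_avoidE[OF r2 finn] by blast
  have ne2: "p2 \<noteq> []" using p2 unfolding is_path_def by auto
  obtain m where m: "hd p2 = y m" using p2(2) by blast
  have mn: "n \<le> m"
  proof (rule ccontr)
    assume "\<not> n \<le> m"
    then have "y m \<in> y ` {..<n}" by auto
    moreover have "y m \<in> set p2"
    proof -
      have "hd p2 \<in> set p2" using ne2 by (rule hd_in_set)
      then show ?thesis using m by simp
    qed
    ultimately show False using p2(4) by blast
  qed
  have yF: "y k \<notin> F" if "k \<ge> N" for k
  proof
    assume "y k \<in> F"
    then have "k \<in> y -` F" by simp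
    then have "k < N" using N by blast
    then show False using that by simp
  qed
  have seg: "(y n, y (n + k)) \<in> (G \<inter> (-F) \<times> (-F))\<^sup>*" for k
  proof (induction k)
    case 0 then show ?case by simp
  next
    case (Suc k)
    have "(y (n+k), y (Suc (n+k))) \<in> G" using y unfolding is_ray_def by auto
    moreover have "y (n+k) \<notin> F" "y (Suc (n+k)) \<notin> F" using yF nN by auto
    ultimately show ?case using Suc by (auto intro: rtrancl_into_rtrancl)
  qed
  have a: "(hd p1, last p1) \<in> (G \<inter> (-F) \<times> (-F))\<^sup>*" by (rule path_rtrancl[OF p1(1)]) (use p1(4) in blast)
  have b: "(hd p2, last p2) \<in> (G \<inter> (-F) \<times> (-F))\<^sup>*" by (rule path_rtrancl[OF p2(1)]) (use p2(4) in blast)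
  have c: "(y n, y m) \<in> (G \<inter> (-F) \<times> (-F))\<^sup>*" using seg[of "m - n"] mn by simp
  have "(hd p1, last p2) \<in> (G \<inter> (-F) \<times> (-F))\<^sup>*" using rtrancl_trans[OF a[unfolded n] c] b[unfolded m] by (rule rtrancl_trans)
  moreover have "hd p1 \<in> -F" using p1(4) ne1 hd_in_set by blast
  ultimately have "\<exists>q. is_path G q \<and> hd q = hd p1 \<and> last q = last p2 \<and> set q \<subseteq> -F" by (rule rtrancl_path)
  then obtain q where "is_path G q" "hd q = hd p1" "last q = last p2" "set q \<subseteq> -F" by blast
  then show "\<exists>p. is_path G p \<and> hd p \<in> X \<and> last p \<in> Z \<and> set p \<inter> F = {}"
    using p1(2) p2(3) by (intro exI[of _ q]) auto
qed

lemma trans_raysets: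
  assumes "Y \<in> ray_sets G" "reach_le G X Y" "reach_le G Y Z"
  shows "reach_le G X Z"
proof -
  obtain y where Y: "Y = range y" and "is_ray G y \<or> is_antiray G y" using assms(1) unfolding ray_sets_def by blast
  then consider "is_ray G y" | "is_antiray G y" by blast
  then show ?thesis
  proof cases
    case 1 then show ?thesis using trans_ray[OF 1, of X Z] assms(2,3) Y by simp
  next
    case 2
    then have "is_ray (G\<inverse>) y" unfolding is_ray_def is_antiray_def by auto
    moreover have "reach_le (G\<inverse>) Z Y" "reach_le (G\<inverse>) Y X" using assms(2,3) reach_conv by blast+
    ultimately have "reach_le (G\<inverse>) Z X" using trans_ray[of "G\<inverse>" y Z X] Y by simp
    then show ?thesis using reach_conv by blast
  qed
qed

lemma reach_refl: assumes "infinite X" shows "reach_le G X X"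
  unfolding reach_le_iff avoid_reach_def
proof (intro allI impI)
  fix F :: "'a set" assume "finite F"
  then have "infinite (X - F)" using assms by simp
  then have "X - F \<noteq> {}" by (metis finite.emptyI)
  then obtain x where "x \<in> X" "x \<notin> F" by blast
  then show "\<exists>p. is_path G p \<and> hd p \<in> X \<and> last p \<in> X \<and> set p \<inter> F = {}"
    by (intro exI[of _ "[x]"]) (auto simp: is_path_def)
qed

lemma raysets_infinite: "Y \<in> ray_sets G \<Longrightarrow> infinite Y"
  unfolding ray_sets_def is_ray_def is_antiray_def by (auto simp: range_inj_infinite)

lemma walk_reach:
  fixes w :: "nat \<Rightarrow> 'v"
  assumes w: "\<forall>j. (w j, w (Suc j)) \<in> G" and fo: "\<forall>x. finite {j. w j = x}"
    and I: "infinite I" and J: "infinite J"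
  shows "reach_le G (w ` I) (w ` J)"
  unfolding reach_le_iff avoid_reach_def
proof (intro allI impI)
  fix F :: "'v set" assume fin: "finite F"
  have "{j. w j \<in> F} = (\<Union>x\<in>F. {j. w j = x})" by auto
  then have "finite {j. w j \<in> F}" using fin fo by simp
  then obtain M where "{j. w j \<in> F} \<subseteq> {..<M}" using finite_nat_bounded by blast
  then have M: "\<forall>j. w j \<in> F \<longrightarrow> j < M" by auto
  obtain p where p: "p \<in> I" "M \<le> p" using I unfolding infinite_nat_iff_unbounded_le by blast
  obtain q where q: "q \<in> J" "p \<le> q" using J unfolding infinite_nat_iff_unbounded_le by blast
  have seg: "(w p, w (p + k)) \<in> (G \<inter> (-F) \<times> (-F))\<^sup>*" for k
  proof (induction k)
    case 0 then show ?case by simp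
  next
    case (Suc k)
    have "\<not> (p + k < M)" "\<not> (Suc (p+k) < M)" using p by auto
    then have "w (p+k) \<notin> F" "w (Suc (p+k)) \<notin> F" using M by blast+
    then show ?case using Suc w by (auto intro: rtrancl_into_rtrancl)
  qed
  have "(w p, w q) \<in> (G \<inter> (-F) \<times> (-F))\<^sup>*" using seg[of "q - p"] q by simp
  moreover have "w p \<in> -F"
  proof -
    have "\<not> p < M" using p by auto
    then show ?thesis using M by blast
  qed
  ultimately have "\<exists>r. is_path G r \<and> hd r = w p \<and> last r = w q \<and> set r \<subseteq> -F" by (rule rtrancl_path)
  then obtain r where "is_path G r" "hd r = w p" "last r = w q" "set r \<subseteq> -F" by blast
  then show "\<exists>r. is_path G r \<and> hd r \<in> w ` I \<and> last r \<in> w ` J \<and> set r \<inter> F = {}"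
    using p q by (intro exI[of _ r]) auto
qed

lemma walk_ray:
  assumes w: "\<forall>j. (w j, w (Suc j)) \<in> G" and fo: "\<forall>x. finite {j. w j = x}"
  shows "\<exists>i. is_ray G (w \<circ> i) \<and> strict_mono i"
proof -
  define lo where "lo = (\<lambda>x. Max {j. w j = x})"
  have lo1: "w j = x \<Longrightarrow> j \<le> lo x" for j x unfolding lo_def using fo by (simp add: Max_ge)
  have lo2: "w j = x \<Longrightarrow> w (lo x) = x" for j x unfolding lo_def using fo Max_in[of "{j. w j = x}"]
    by auto
  define i where "i = rec_nat (lo (w 0)) (\<lambda>_ k. lo (w (Suc k)))"
  have i0: "i 0 = lo (w 0)" and iS: "i (Suc k) = lo (w (Suc (i k)))" for k by (simp_all add: i_def)
  have sm: "strict_mono i" unfolding strict_mono_Suc_iff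
  proof
    fix n
    have "Suc (i n) \<le> lo (w (Suc (i n)))" by (rule lo1) simp
    then show "i n < i (Suc n)" using iS by simp
  qed
  have wi: "\<exists>x. i k = lo x \<and> w (i k) = x" for k
    by (cases k) (use i0 iS lo2 in auto)
  have inj: "inj (w \<circ> i)"
  proof (rule injI)
    fix a b assume eq: "(w \<circ> i) a = (w \<circ> i) b"
    show "a = b"
    proof (rule ccontr)
      assume "a \<noteq> b"
      then consider "a < b" | "b < a" by linarith
      then show False
      proof cases
        case 1
        obtain x where x: "i a = lo x" "w (i a) = x" using wi by blast
        have "w (i b) = x" using eq x by simp
        then have "i b \<le> lo x" using lo1 by blast
        have "i a < i b" using sm 1 by (rule strict_monoD)
        then show False using \<open>i b \<le> lo x\<close> x(1) by simp
      next
        case 2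
        obtain x where x: "i b = lo x" "w (i b) = x" using wi by blast
        have "w (i a) = x" using eq x by simp
        then have "i a \<le> lo x" using lo1 by blast
        have "i b < i a" using sm 2 by (rule strict_monoD)
        then show False using \<open>i a \<le> lo x\<close> x(1) by simp
      qed
    qed
  qed
  have "((w \<circ> i) k, (w \<circ> i) (Suc k)) \<in> G" for k
    using w[rule_format, of "i k"] iS lo2 by simp
  then show ?thesis using inj sm unfolding is_ray_def by blast
qed


fun mulw :: "'a::semigroup_mult \<Rightarrow> 'a list \<Rightarrow> 'a" where
  "mulw v [] = v"
| "mulw v (b # bs) = mulw (v * b) bs"

lemma mulw_append: "mulw v (xs @ ys) = mulw (mulw v xs) ys"
  by (induction xs arbitrary: v) auto

lemma mulw_snoc: "mulw v (xs @ [b]) = mulw v xs * b"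
  by (simp add: mulw_append)

lemma sgen_word: "x \<in> sgen B \<Longrightarrow> \<exists>ws. ws \<noteq> [] \<and> set ws \<subseteq> B \<and> (\<forall>v. mulw v ws = v * x)"
proof (induction rule: sgen.induct)
  case (base a)
  then show ?case by (intro exI[of _ "[a]"]) auto
next
  case (mult x y)
  then obtain ws1 ws2 where "ws1 \<noteq> []" "set ws1 \<subseteq> B" "\<forall>v. mulw v ws1 = v * x"
    "ws2 \<noteq> []" "set ws2 \<subseteq> B" "\<forall>v. mulw v ws2 = v * y" by blast
  then show ?case by (intro exI[of _ "ws1 @ ws2"]) (auto simp: mulw_append mult.assoc)
qed

lemma walkB:
  assumes "set ws \<subseteq> B" "v \<notin> F" "\<forall>z\<in>F. \<forall>i. mulw z (drop i ws) \<noteq> mulw v ws"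
  shows "(v, mulw v ws) \<in> (cayley_r B \<inter> (-F) \<times> (-F))\<^sup>*"
  using assms
proof (induction ws arbitrary: v)
  case Nil then show ?case by simp
next
  case (Cons b ws)
  have vb: "v * b \<notin> F"
  proof
    assume "v * b \<in> F"
    with Cons.prems(3) have "\<forall>i. mulw (v*b) (drop i (b # ws)) \<noteq> mulw v (b # ws)" by (rule bspec)
    then have "mulw (v*b) (drop 1 (b # ws)) \<noteq> mulw v (b # ws)" by (rule spec)
    then show False by simp
  qed
  have IH: "(v * b, mulw (v * b) ws) \<in> (cayley_r B \<inter> (-F) \<times> (-F))\<^sup>*"
  proof (rule Cons.IH)
    show "set ws \<subseteq> B" using Cons.prems by simp
    show "v * b \<notin> F" by fact
    show "\<forall>z\<in>F. \<forall>i. mulw z (drop i ws) \<noteq> mulw (v * b) ws"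
    proof (intro ballI allI)
      fix z i assume "z \<in> F"
      with Cons.prems(3) have "\<forall>i. mulw z (drop i (b # ws)) \<noteq> mulw v (b # ws)" by (rule bspec)
      then have "mulw z (drop (Suc i) (b # ws)) \<noteq> mulw v (b # ws)" by (rule spec)
      then show "mulw z (drop i ws) \<noteq> mulw (v * b) ws" by simp
    qed
  qed
  have e: "(v, v * b) \<in> cayley_r B \<inter> (-F) \<times> (-F)"
    using Cons.prems vb unfolding cayley_r_def by auto
  have "(v, mulw (v * b) ws) \<in> (cayley_r B \<inter> (-F) \<times> (-F))\<^sup>*"
    using e IH by (rule converse_rtrancl_into_rtrancl)
  then show ?case by simp
qed

lemma transfer:
  fixes A B :: "'a::semigroup_mult set"
  assumes finA: "finite A" and AB: "A \<subseteq> sgen B" and r: "reach_le (cayley_r A) X Y"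
  shows "reach_le (cayley_r B) X Y"
  unfolding reach_le_iff avoid_reach_def
proof (intro allI impI)
  fix F :: "'a set" assume fin: "finite F"
  define W where "W = (\<lambda>a. SOME ws. ws \<noteq> [] \<and> set ws \<subseteq> B \<and> (\<forall>v. mulw v ws = v * a))"
  have W: "W a \<noteq> [] \<and> set (W a) \<subseteq> B \<and> (\<forall>v. mulw v (W a) = v * a)" if "a \<in> A" for a
  proof -
    have "a \<in> sgen B" using AB that by blast
    then have "\<exists>ws. ws \<noteq> [] \<and> set ws \<subseteq> B \<and> (\<forall>v. mulw v ws = v * a)" by (rule sgen_word)
    then show ?thesis unfolding W_def by (rule someI_ex)
  qed
  define G where "G = F \<union> (\<Union>z\<in>F. \<Union>a\<in>A. (\<lambda>i. mulw z (drop i (W a))) ` {..length (W a)})"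
  have finG: "finite G" unfolding G_def using fin finA by auto
  have edge: "(u, v) \<in> (cayley_r B \<inter> (-F) \<times> (-F))\<^sup>*" if uv: "(u, v) \<in> cayley_r A \<inter> (-G) \<times> (-G)" for u v
  proof -
    obtain a where a: "a \<in> A" "v = u * a" using uv unfolding cayley_r_def by auto
    have Wa: "W a \<noteq> []" "set (W a) \<subseteq> B" "\<forall>v. mulw v (W a) = v * a" using W[OF a(1)] by auto
    have uF: "u \<notin> F" using uv unfolding G_def by auto
    have "\<forall>z\<in>F. \<forall>i. mulw z (drop i (W a)) \<noteq> mulw u (W a)"
    proof (intro ballI allI notI)
      fix z i assume z: "z \<in> F" and eq: "mulw z (drop i (W a)) = mulw u (W a)"
      have "drop i (W a) = drop (min i (length (W a))) (W a)" by (simp add: min_def)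
      then have "mulw u (W a) \<in> G" using z a(1) eq unfolding G_def
        by (intro UnI2 UN_I[of z] UN_I[of a]) (auto intro!: image_eqI[of _ _ "min i (length (W a))"])
      then show False using uv a Wa(3) by auto
    qed
    from walkB[OF Wa(2) uF this] show ?thesis using Wa(3) a(2) by simp
  qed
  obtain p where p: "is_path (cayley_r A) p" "hd p \<in> X" "last p \<in> Y" "set p \<inter> G = {}"
    using reach_le_avoidE[OF r finG] by blast
  have ne: "p \<noteq> []" using p unfolding is_path_def by auto
  have "(hd p, last p) \<in> (cayley_r A \<inter> (-G) \<times> (-G))\<^sup>*" by (rule path_rtrancl[OF p(1)]) (use p(4) in blast)
  moreover have sub: "cayley_r A \<inter> (-G) \<times> (-G) \<subseteq> (cayley_r B \<inter> (-F) \<times> (-F))\<^sup>*"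
  proof (rule subrelI)
    fix u v assume "(u, v) \<in> cayley_r A \<inter> (-G) \<times> (-G)"
    then show "(u, v) \<in> (cayley_r B \<inter> (-F) \<times> (-F))\<^sup>*" by (rule edge)
  qed
  ultimately have "(hd p, last p) \<in> (cayley_r B \<inter> (-F) \<times> (-F))\<^sup>*"
    using rtrancl_subset_rtrancl by blast
  moreover have "hd p \<in> -F"
  proof -
    have FG: "F \<subseteq> G" unfolding G_def by (rule Un_upper1)
    have "hd p \<in> set p" using ne by (rule hd_in_set)
    then show ?thesis using p(4) FG by blast
  qed
  ultimately have "\<exists>q. is_path (cayley_r B) q \<and> hd q = hd p \<and> last q = last p \<and> set q \<subseteq> -F" by (rule rtrancl_path)
  then obtain q where "is_path (cayley_r B) q" "hd q = hd p" "last q = last p" "set q \<subseteq> -F" by blast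
  then show "\<exists>q. is_path (cayley_r B) q \<and> hd q \<in> X \<and> last q \<in> Y \<and> set q \<inter> F = {}"
    using p by (intro exI[of _ q]) auto
qed


lemma blocks_walk:
  fixes L :: "nat \<Rightarrow> 'v list"
  assumes ne: "\<forall>n. L n \<noteq> []"
    and inb: "\<forall>n k. Suc k < length (L n) \<longrightarrow> (L n ! k, L n ! Suc k) \<in> D"
    and btw: "\<forall>n. (last (L n), hd (L (Suc n))) \<in> D"
    and fin: "\<forall>x. finite {n. x \<in> set (L n)}"
  shows "\<exists>w I. (\<forall>j. (w j, w (Suc j)) \<in> D) \<and> (\<forall>x. finite {j. w j = x}) \<and> w ` I = range (\<lambda>n. hd (L n))"
proof -
  define step where "step = (\<lambda>(n,k). if Suc k < length (L n) then (n, Suc k) else (Suc n, 0::nat))"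
  define st where "st = (\<lambda>j. (step ^^ j) (0,0))"
  have st0: "st 0 = (0,0)" and stS: "st (Suc j) = step (st j)" for j by (simp_all add: st_def)
  have inv: "snd (st j) < length (L (fst (st j)))" for j
  proof (induction j)
    case 0 then show ?case using ne st0 by simp
  next
    case (Suc j)
    obtain n k where nk: "st j = (n,k)" by fastforce
    show ?case using ne nk by (simp add: stS step_def)
  qed
  define w where "w = (\<lambda>j. L (fst (st j)) ! snd (st j))"
  have edges: "(w j, w (Suc j)) \<in> D" for j
  proof -
    obtain n k where nk: "st j = (n,k)" by fastforce
    have kl: "k < length (L n)" using inv[of j] nk by simp
    show ?thesis
    proof (cases "Suc k < length (L n)")
      case True
      then show ?thesis using nk inb unfolding w_def by (simp add: stS step_def)
    next
      case False
      then have "k = length (L n) - 1" using kl by simp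
      then have "L n ! k = last (L n)" using ne by (simp add: last_conv_nth)
      moreover have "st (Suc j) = (Suc n, 0)" using nk False by (simp add: stS step_def)
      ultimately show ?thesis using nk btw ne unfolding w_def by (simp add: hd_conv_nth)
    qed
  qed
  define g where "g = (\<lambda>(n,k). (\<Sum>m<n. length (L m)) + k)"
  have gst: "g (st j) = j" for j
  proof (induction j)
    case 0 then show ?case by (simp add: st0 g_def)
  next
    case (Suc j)
    obtain n k where nk: "st j = (n,k)" by fastforce
    have kl: "k < length (L n)" using inv[of j] nk by simp
    show ?case using Suc nk kl by (auto simp: stS step_def g_def)
  qed
  have injst: "inj st"
  proof (rule injI)
    fix a b assume "st a = st b"
    then have "g (st a) = g (st b)" by simp
    then show "a = b" using gst by simp
  qed
  have fo: "finite {j. w j = x}" for x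
  proof -
    have "{j. w j = x} \<subseteq> st -` (SIGMA n:{n. x \<in> set (L n)}. {..<length (L n)})"
    proof
      fix j assume "j \<in> {j. w j = x}"
      then show "j \<in> st -` (SIGMA n:{n. x \<in> set (L n)}. {..<length (L n)})"
        using inv[of j] unfolding w_def by (cases "st j") auto
    qed
    moreover have "finite (SIGMA n:{n. x \<in> set (L n)}. {..<length (L n)})"
      using fin by (intro finite_SigmaI) auto
    then have "finite (st -` (SIGMA n:{n. x \<in> set (L n)}. {..<length (L n)}))" using injst by (rule finite_vimageI)
    ultimately show ?thesis by (rule finite_subset)
  qed
  have reach: "\<exists>j. st j = (n,0)" for n
  proof (induction n)
    case 0 then show ?case using st0 by blast
  next
    case (Suc n)
    then obtain j where j: "st j = (n,0)" by blast
    have run: "k < length (L n) \<Longrightarrow> st (j+k) = (n,k)" for k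
    proof (induction k)
      case 0 then show ?case using j by simp
    next
      case (Suc k) then show ?case by (simp add: stS step_def)
    qed
    have "st (j + (length (L n) - 1)) = (n, length (L n) - 1)" using run ne by simp
    then have "st (Suc (j + (length (L n) - 1))) = (Suc n, 0)" using ne by (simp add: stS step_def)
    then show ?case by blast
  qed
  have img: "w ` {j. snd (st j) = 0} = range (\<lambda>n. hd (L n))"
  proof
    show "w ` {j. snd (st j) = 0} \<subseteq> range (\<lambda>n. hd (L n))"
      using ne unfolding w_def by (auto simp: hd_conv_nth)
    show "range (\<lambda>n. hd (L n)) \<subseteq> w ` {j. snd (st j) = 0}"
    proof
      fix y assume "y \<in> range (\<lambda>n. hd (L n))"
      then obtain n where y: "y = hd (L n)" by blast
      obtain j where "st j = (n,0)" using reach by blast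
      then show "y \<in> w ` {j. snd (st j) = 0}" using y ne unfolding w_def
        by (intro image_eqI[of _ _ j]) (auto simp: hd_conv_nth)
    qed
  qed
  show ?thesis using edges fo img by blast
qed


lemma iso_abstract:
  fixes G1 G2 :: "('v \<times> 'v) set"
  assumes eq: "reach_le G1 = reach_le G2"
   and m1: "\<forall>X\<in>ray_sets G1. \<exists>Y\<in>ray_sets G2. reach_le G2 X Y \<and> reach_le G2 Y X"
   and m2: "\<forall>Y\<in>ray_sets G2. \<exists>X\<in>ray_sets G1. reach_le G2 X Y \<and> reach_le G2 Y X"
  shows "end_poset_iso G1 G2"
proof -
  define R where "R = reach_le G2"
  define Q1 where "Q1 = ray_sets G1"
  define Q2 where "Q2 = ray_sets G2"
  have tr: "Y \<in> Q1 \<union> Q2 \<Longrightarrow> R X Y \<Longrightarrow> R Y Z \<Longrightarrow> R X Z" for X Y Z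
    unfolding R_def Q1_def Q2_def using trans_raysets[of Y G1 X Z] trans_raysets[of Y G2 X Z] eq by auto
  have rf: "X \<in> Q1 \<union> Q2 \<Longrightarrow> R X X" for X
    unfolding R_def Q1_def Q2_def using reach_refl[of X G2] raysets_infinite[of X G1] raysets_infinite[of X G2] by auto
  define cls where "cls = (\<lambda>Q X. {Y\<in>Q. R X Y \<and> R Y X})"
  have ends1: "ends G1 = cls Q1 ` Q1" unfolding ends_def end_equiv_def cls_def Q1_def R_def eq ..
  have ends2: "ends G2 = cls Q2 ` Q2" unfolding ends_def end_equiv_def cls_def Q2_def R_def ..
  have le1: "end_le G1 E F \<longleftrightarrow> (\<exists>X\<in>E. \<exists>Y\<in>F. R X Y)" for E F unfolding end_le_def R_def eq ..
  have le2: "end_le G2 E F \<longleftrightarrow> (\<exists>X\<in>E. \<exists>Y\<in>F. R X Y)" for E F unfolding end_le_def R_def ..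
  define f where "f = (\<lambda>E. {Y\<in>Q2. \<exists>X\<in>E. R X Y \<and> R Y X})"
  have fa: "X0 \<in> Q1 \<Longrightarrow> f (cls Q1 X0) = cls Q2 X0" for X0
  proof -
    assume X0: "X0 \<in> Q1"
    show ?thesis
    proof
      show "f (cls Q1 X0) \<subseteq> cls Q2 X0"
      proof
        fix Y assume "Y \<in> f (cls Q1 X0)"
        then obtain X where XY: "Y \<in> Q2" "X \<in> Q1" "R X0 X" "R X X0" "R X Y" "R Y X"
          unfolding f_def cls_def by blast
        have "R X0 Y" using tr[of X X0 Y] XY by blast
        moreover have "R Y X0" using tr[of X Y X0] XY by blast
        ultimately show "Y \<in> cls Q2 X0" using XY unfolding cls_def by blast
      qed
      show "cls Q2 X0 \<subseteq> f (cls Q1 X0)"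
        unfolding f_def cls_def using rf X0 by blast
    qed
  qed
  have cl_eq: "X0 \<in> Q1 \<union> Q2 \<Longrightarrow> Y0 \<in> Q1 \<union> Q2 \<Longrightarrow> R X0 Y0 \<Longrightarrow> R Y0 X0 \<Longrightarrow> cls Q X0 = cls Q Y0" for X0 Y0 Q
  proof -
    assume a: "X0 \<in> Q1 \<union> Q2" "Y0 \<in> Q1 \<union> Q2" "R X0 Y0" "R Y0 X0"
    show ?thesis
    proof
      show "cls Q X0 \<subseteq> cls Q Y0"
      proof
        fix Z assume "Z \<in> cls Q X0"
        then have Z: "Z \<in> Q" "R X0 Z" "R Z X0" unfolding cls_def by auto
        have "R Y0 Z" using tr[of X0 Y0 Z] a Z by blast
        moreover have "R Z Y0" using tr[of X0 Z Y0] a Z by blast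
        ultimately show "Z \<in> cls Q Y0" using Z unfolding cls_def by blast
      qed
      show "cls Q Y0 \<subseteq> cls Q X0"
      proof
        fix Z assume "Z \<in> cls Q Y0"
        then have Z: "Z \<in> Q" "R Y0 Z" "R Z Y0" unfolding cls_def by auto
        have "R X0 Z" using tr[of Y0 X0 Z] a Z by blast
        moreover have "R Z X0" using tr[of Y0 Z X0] a Z by blast
        ultimately show "Z \<in> cls Q X0" using Z unfolding cls_def by blast
      qed
    qed
  qed
  have ord: "X0 \<in> Q1 \<Longrightarrow> X1 \<in> Q1 \<Longrightarrow> (\<exists>X\<in>cls Q X0. \<exists>Y\<in>cls Q X1. R X Y) \<longleftrightarrow> R X0 X1"
    if Q: "Q = Q1 \<or> Q = Q2" for X0 X1 Q
  proof -
    assume X0: "X0 \<in> Q1" and X1: "X1 \<in> Q1"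
    show ?thesis
    proof
      assume "\<exists>X\<in>cls Q X0. \<exists>Y\<in>cls Q X1. R X Y"
      then obtain X Y where XY: "X \<in> Q" "Y \<in> Q" "R X0 X" "R X Y" "R Y X1" unfolding cls_def by blast
      have "X \<in> Q1 \<union> Q2" "Y \<in> Q1 \<union> Q2" using XY Q by auto
      then have "R X0 Y" using tr[of X X0 Y] XY by blast
      then show "R X0 X1" using tr[of Y X0 X1] XY \<open>Y \<in> Q1 \<union> Q2\<close> by blast
    next
      assume r: "R X0 X1"
      show "\<exists>X\<in>cls Q X0. \<exists>Y\<in>cls Q X1. R X Y"
      proof (cases "Q = Q1")
        case True
        then show ?thesis using X0 X1 rf r unfolding cls_def by blast
      next
        case False
        then have Q2: "Q = Q2" using Q by blast
        obtain Y0 where Y0: "Y0 \<in> Q2" "R X0 Y0" "R Y0 X0" using m1 X0 unfolding Q1_def Q2_def R_def by blast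
        obtain Y1 where Y1: "Y1 \<in> Q2" "R X1 Y1" "R Y1 X1" using m1 X1 unfolding Q1_def Q2_def R_def by blast
        have "R Y0 X1" using tr[of X0 Y0 X1] X0 Y0 r by blast
        then have "R Y0 Y1" using tr[of X1 Y0 Y1] X1 Y1 by blast
        then show ?thesis using Y0 Y1 Q2 unfolding cls_def by blast
      qed
    qed
  qed
  have inj: "inj_on f (ends G1)"
  proof (rule inj_onI)
    fix E E' assume E: "E \<in> ends G1" and E': "E' \<in> ends G1" and fe: "f E = f E'"
    obtain X0 where X0: "X0 \<in> Q1" "E = cls Q1 X0" using E ends1 by blast
    obtain X1 where X1: "X1 \<in> Q1" "E' = cls Q1 X1" using E' ends1 by blast
    have c: "cls Q2 X0 = cls Q2 X1" using fe fa X0 X1 by simp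
    obtain Y0 where Y0: "Y0 \<in> Q2" "R X0 Y0" "R Y0 X0" using m1 X0 unfolding Q1_def Q2_def R_def by blast
    have "Y0 \<in> cls Q2 X1" using c Y0 unfolding cls_def by blast
    then have "R X1 Y0" "R Y0 X1" unfolding cls_def by auto
    then have "R X0 X1" "R X1 X0" using tr[of Y0 X0 X1] tr[of Y0 X1 X0] Y0 by blast+
    then show "E = E'" using cl_eq[of X0 X1 Q1] X0 X1 by blast
  qed
  have img: "f ` ends G1 = ends G2"
  proof
    show "f ` ends G1 \<subseteq> ends G2"
    proof
      fix F assume "F \<in> f ` ends G1"
      then obtain X0 where X0: "X0 \<in> Q1" "F = cls Q2 X0" using ends1 fa by auto
      obtain Y0 where Y0: "Y0 \<in> Q2" "R X0 Y0" "R Y0 X0" using m1 X0 unfolding Q1_def Q2_def R_def by blast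
      have "F = cls Q2 Y0" using X0 Y0 cl_eq[of X0 Y0 Q2] by blast
      then show "F \<in> ends G2" using ends2 Y0 by blast
    qed
    show "ends G2 \<subseteq> f ` ends G1"
    proof
      fix F assume "F \<in> ends G2"
      then obtain Y0 where Y0: "Y0 \<in> Q2" "F = cls Q2 Y0" using ends2 by blast
      obtain X0 where X0: "X0 \<in> Q1" "R X0 Y0" "R Y0 X0" using m2 Y0 unfolding Q1_def Q2_def R_def by blast
      have "F = cls Q2 X0" using X0 Y0 cl_eq[of X0 Y0 Q2] by blast
      then show "F \<in> f ` ends G1" using fa X0 ends1 by auto
    qed
  qed
  have "\<forall>E\<in>ends G1. \<forall>F\<in>ends G1. end_le G1 E F \<longleftrightarrow> end_le G2 (f E) (f F)"
  proof (intro ballI)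
    fix E F assume E: "E \<in> ends G1" and F: "F \<in> ends G1"
    obtain X0 where X0: "X0 \<in> Q1" "E = cls Q1 X0" using E ends1 by blast
    obtain X1 where X1: "X1 \<in> Q1" "F = cls Q1 X1" using F ends1 by blast
    show "end_le G1 E F \<longleftrightarrow> end_le G2 (f E) (f F)"
      unfolding le1 le2 using X0 X1 fa ord[of Q1] ord[of Q2] by simp
  qed
  then show ?thesis unfolding end_poset_iso_def bij_betw_def using inj img by blast
qed


lemma finite_vimage_single: "inj f \<Longrightarrow> finite {n. f n = c}"
  using finite_vimageI[of "{c}" f] by (simp add: vimage_def)

lemma ray_match:
  fixes A B :: "'a::semigroup_mult set"
  assumes finA: "finite A" and AB: "A \<subseteq> sgen B" and X: "X \<in> ray_sets (cayley_r A)"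
  shows "\<exists>Y\<in>ray_sets (cayley_r B). reach_le (cayley_r B) X Y \<and> reach_le (cayley_r B) Y X"
proof -
  define W where "W = (\<lambda>a. SOME ws. ws \<noteq> [] \<and> set ws \<subseteq> B \<and> (\<forall>v. mulw v ws = v * a))"
  have W: "W a \<noteq> [] \<and> set (W a) \<subseteq> B \<and> (\<forall>v. mulw v (W a) = v * a)" if "a \<in> A" for a
  proof -
    have "a \<in> sgen B" using AB that by blast
    then have "\<exists>ws. ws \<noteq> [] \<and> set ws \<subseteq> B \<and> (\<forall>v. mulw v ws = v * a)" by (rule sgen_word)
    then show ?thesis unfolding W_def by (rule someI_ex)
  qed
  obtain r where Xr: "X = range r" and rr: "is_ray (cayley_r A) r \<or> is_antiray (cayley_r A) r"
    using X unfolding ray_sets_def by blast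
  have ir: "inj r" using rr unfolding is_ray_def is_antiray_def by auto
  have infX: "infinite X" using Xr ir by (simp add: range_inj_infinite)
  consider "is_ray (cayley_r A) r" | "is_antiray (cayley_r A) r" using rr by blast
  then show ?thesis
  proof cases
    case 1
    define an where "an = (\<lambda>n. SOME a. a \<in> A \<and> r (Suc n) = r n * a)"
    have an: "an n \<in> A \<and> r (Suc n) = r n * an n" for n
    proof -
      have "\<exists>a. a \<in> A \<and> r (Suc n) = r n * a" using 1 unfolding is_ray_def cayley_r_def by blast
      then show ?thesis unfolding an_def by (rule someI_ex)
    qed
    define ws where "ws = (\<lambda>n. W (an n))"
    have ws: "ws n \<noteq> []" "set (ws n) \<subseteq> B" "mulw (r n) (ws n) = r (Suc n)" for n
      using W[of "an n"] an[of n] unfolding ws_def by auto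
    define L where "L = (\<lambda>n. map (\<lambda>k. mulw (r n) (take k (ws n))) [0..<length (ws n)])"
    have ne: "\<forall>n. L n \<noteq> []" using ws unfolding L_def by auto
    have inb: "\<forall>n k. Suc k < length (L n) \<longrightarrow> (L n ! k, L n ! Suc k) \<in> cayley_r B"
    proof (intro allI impI)
      fix n k assume k: "Suc k < length (L n)"
      then have k': "Suc k < length (ws n)" unfolding L_def by simp
      have "L n ! Suc k = mulw (r n) (take k (ws n)) * ws n ! k" using k'
        unfolding L_def by (simp add: take_Suc_conv_app_nth mulw_snoc del: upt_Suc)
      moreover have "L n ! k = mulw (r n) (take k (ws n))" using k' unfolding L_def by (simp del: upt_Suc)
      moreover have "ws n ! k \<in> B" using ws(2) k' by (meson Suc_lessD nth_mem subsetD)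
      ultimately show "(L n ! k, L n ! Suc k) \<in> cayley_r B" unfolding cayley_r_def by auto
    qed
    have hdL: "hd (L n) = r n" for n using ws(1)[of n] unfolding L_def by (simp add: hd_map hd_upt del: upt_Suc)
    have btw: "\<forall>n. (last (L n), hd (L (Suc n))) \<in> cayley_r B"
    proof
      fix n
      define l where "l = length (ws n)"
      have l: "0 < l" using ws(1) unfolding l_def by simp
      have "last (L n) = mulw (r n) (take (l - 1) (ws n))" using l unfolding L_def l_def
        by (simp add: last_map)
      moreover have "r (Suc n) = mulw (r n) (take (l - 1) (ws n)) * ws n ! (l - 1)"
      proof -
        have e1: "take (Suc (l - 1)) (ws n) = take (l - 1) (ws n) @ [ws n ! (l - 1)]"
          using l unfolding l_def by (intro take_Suc_conv_app_nth) simp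
        have e2: "take (Suc (l - 1)) (ws n) = ws n" using l unfolding l_def by simp
        note e3 = e1[unfolded e2]
        show ?thesis using ws(3)[of n] by (subst (asm) e3) (simp add: mulw_snoc)
      qed
      moreover have "ws n ! (l - 1) \<in> B"
      proof -
        have "l - 1 < length (ws n)" using l unfolding l_def by simp
        then have "ws n ! (l - 1) \<in> set (ws n)" by (rule nth_mem)
        then show ?thesis using ws(2)[of n] by blast
      qed
      ultimately show "(last (L n), hd (L (Suc n))) \<in> cayley_r B" using hdL unfolding cayley_r_def by auto
    qed
    have fin: "\<forall>x. finite {n. x \<in> set (L n)}"
    proof
      fix x
      have "{n. x \<in> set (L n)} \<subseteq> (\<Union>a\<in>A. \<Union>k\<in>{..<length (W a)}. {n. (r \<circ> Suc) n = mulw x (drop k (W a))})"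
      proof
        fix n assume "n \<in> {n. x \<in> set (L n)}"
        then obtain k where k: "k < length (ws n)" "x = mulw (r n) (take k (ws n))" unfolding L_def by auto
        have "r (Suc n) = mulw (mulw (r n) (take k (ws n))) (drop k (ws n))"
          using ws(3)[of n] mulw_append[of "r n" "take k (ws n)" "drop k (ws n)"] by simp
        then show "n \<in> (\<Union>a\<in>A. \<Union>k\<in>{..<length (W a)}. {n. (r \<circ> Suc) n = mulw x (drop k (W a))})"
          using k an[of n] unfolding ws_def by auto
      qed
      moreover have "finite (\<Union>a\<in>A. \<Union>k\<in>{..<length (W a)}. {n. (r \<circ> Suc) n = mulw x (drop k (W a))})"
      proof -
        have irs: "inj (r \<circ> Suc)" using ir by (simp add: inj_compose)
        show ?thesis by (intro finite_UN_I finA finite_lessThan finite_vimage_single irs)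
      qed
      ultimately show "finite {n. x \<in> set (L n)}" by (rule finite_subset)
    qed
    obtain w I where w: "\<forall>j. (w j, w (Suc j)) \<in> cayley_r B" "\<forall>x. finite {j. w j = x}" "w ` I = range (\<lambda>n. hd (L n))"
      using blocks_walk[OF ne inb btw fin] by blast
    have wI: "w ` I = X" using w(3) hdL Xr by simp
    have infI: "infinite I" using wI infX by auto
    obtain i where i: "is_ray (cayley_r B) (w \<circ> i)" "strict_mono i" using walk_ray[OF w(1) w(2)] by blast
    have infi: "infinite (range i)"
    proof -
      have "inj i" using i(2) by (rule strict_mono_imp_inj_on)
      then show ?thesis by (rule range_inj_infinite)
    qed
    have Yr: "range (w \<circ> i) \<in> ray_sets (cayley_r B)" using i(1) unfolding ray_sets_def by blast
    have ri: "range (w \<circ> i) = w ` range i" by auto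
    have r1: "reach_le (cayley_r B) (w ` I) (w ` range i)" by (rule walk_reach[OF w(1) w(2) infI infi])
    have r2: "reach_le (cayley_r B) (w ` range i) (w ` I)" by (rule walk_reach[OF w(1) w(2) infi infI])
    show ?thesis using Yr r1 r2 unfolding ri wI by blast
  next
    case 2
    define an where "an = (\<lambda>n. SOME a. a \<in> A \<and> r n = r (Suc n) * a)"
    have an: "an n \<in> A \<and> r n = r (Suc n) * an n" for n
    proof -
      have "\<exists>a. a \<in> A \<and> r n = r (Suc n) * a" using 2 unfolding is_antiray_def cayley_r_def by blast
      then show ?thesis unfolding an_def by (rule someI_ex)
    qed
    define ws where "ws = (\<lambda>n. W (an n))"
    have ws: "ws n \<noteq> []" "set (ws n) \<subseteq> B" "mulw (r (Suc n)) (ws n) = r n" for n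
      using W[of "an n"] an[of n] unfolding ws_def by auto
    define L where "L = (\<lambda>n. map (\<lambda>k. mulw (r (Suc n)) (take (length (ws n) - k) (ws n))) [0..<length (ws n)])"
    let ?D = "(cayley_r B)\<inverse>"
    have ne: "\<forall>n. L n \<noteq> []" using ws unfolding L_def by auto
    have inb: "\<forall>n k. Suc k < length (L n) \<longrightarrow> (L n ! k, L n ! Suc k) \<in> ?D"
    proof (intro allI impI)
      fix n k assume k: "Suc k < length (L n)"
      then have k': "Suc k < length (ws n)" unfolding L_def by simp
      define m where "m = length (ws n) - Suc k"
      have m: "m < length (ws n)" "length (ws n) - k = Suc m" using k' unfolding m_def by auto
      have "L n ! k = mulw (r (Suc n)) (take m (ws n)) * ws n ! m" using k' m
        unfolding L_def by (simp add: take_Suc_conv_app_nth mulw_snoc del: upt_Suc)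
      moreover have "L n ! Suc k = mulw (r (Suc n)) (take m (ws n))" using k' unfolding L_def m_def by (simp del: upt_Suc)
      moreover have "ws n ! m \<in> B" using ws(2) m by (meson nth_mem subsetD)
      ultimately show "(L n ! k, L n ! Suc k) \<in> ?D" unfolding cayley_r_def by auto
    qed
    have hdL: "hd (L n) = r n" for n using ws(1)[of n] ws(3)[of n] unfolding L_def by (simp add: hd_map hd_upt del: upt_Suc)
    have btw: "\<forall>n. (last (L n), hd (L (Suc n))) \<in> ?D"
    proof
      fix n
      define l where "l = length (ws n)"
      have l: "0 < l" using ws(1) unfolding l_def by simp
      have e: "length (ws n) - (length (ws n) - 1) = 1" using l unfolding l_def by linarith
      have "last (L n) = mulw (r (Suc n)) (take 1 (ws n))" using l e unfolding L_def l_def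
        by (simp add: last_map)
      also have "\<dots> = r (Suc n) * ws n ! 0" using l unfolding l_def by (simp add: take_Suc_conv_app_nth)
      finally have "last (L n) = r (Suc n) * ws n ! 0" .
      moreover have "ws n ! 0 \<in> B"
      proof -
        have "0 < length (ws n)" using l unfolding l_def by simp
        then have "ws n ! 0 \<in> set (ws n)" by (rule nth_mem)
        then show ?thesis using ws(2)[of n] by blast
      qed
      ultimately show "(last (L n), hd (L (Suc n))) \<in> ?D" using hdL unfolding cayley_r_def by auto
    qed
    have fin: "\<forall>x. finite {n. x \<in> set (L n)}"
    proof
      fix x
      have "{n. x \<in> set (L n)} \<subseteq> (\<Union>a\<in>A. \<Union>k\<in>{..length (W a)}. {n. r n = mulw x (drop k (W a))})"
      proof
        fix n assume "n \<in> {n. x \<in> set (L n)}"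
        then obtain k where k: "k < length (ws n)" "x = mulw (r (Suc n)) (take (length (ws n) - k) (ws n))" unfolding L_def by auto
        have "r n = mulw (mulw (r (Suc n)) (take (length (ws n) - k) (ws n))) (drop (length (ws n) - k) (ws n))"
          using ws(3)[of n] mulw_append[of "r (Suc n)" "take (length (ws n) - k) (ws n)" "drop (length (ws n) - k) (ws n)"] by simp
        then show "n \<in> (\<Union>a\<in>A. \<Union>k\<in>{..length (W a)}. {n. r n = mulw x (drop k (W a))})"
          using k an[of n] unfolding ws_def by (intro UN_I[of "an n"] UN_I[of "length (ws n) - k"]) (auto simp: ws_def)
      qed
      moreover have "finite (\<Union>a\<in>A. \<Union>k\<in>{..length (W a)}. {n. r n = mulw x (drop k (W a))})"
        by (intro finite_UN_I finA finite_atMost finite_vimage_single ir)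
      ultimately show "finite {n. x \<in> set (L n)}" by (rule finite_subset)
    qed
    obtain w I where w: "\<forall>j. (w j, w (Suc j)) \<in> ?D" "\<forall>x. finite {j. w j = x}" "w ` I = range (\<lambda>n. hd (L n))"
      using blocks_walk[OF ne inb btw fin] by blast
    have wI: "w ` I = X" using w(3) hdL Xr by simp
    have infI: "infinite I" using wI infX by auto
    obtain i where i: "is_ray ?D (w \<circ> i)" "strict_mono i" using walk_ray[OF w(1) w(2)] by blast
    have infi: "infinite (range i)"
    proof -
      have "inj i" using i(2) by (rule strict_mono_imp_inj_on)
      then show ?thesis by (rule range_inj_infinite)
    qed
    have "is_antiray (cayley_r B) (w \<circ> i)" using i(1) unfolding is_ray_def is_antiray_def by auto
    then have Yr: "range (w \<circ> i) \<in> ray_sets (cayley_r B)" unfolding ray_sets_def by blast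
    have ri: "range (w \<circ> i) = w ` range i" by auto
    have r1: "reach_le ?D (w ` I) (w ` range i)" by (rule walk_reach[OF w(1) w(2) infI infi])
    have r2: "reach_le ?D (w ` range i) (w ` I)" by (rule walk_reach[OF w(1) w(2) infi infI])
    have r1': "reach_le (cayley_r B) (w ` range i) (w ` I)" using r1 reach_conv by blast
    have r2': "reach_le (cayley_r B) (w ` I) (w ` range i)" using r2 reach_conv by blast
    show ?thesis using Yr r1' r2' unfolding ri wI by blast
  qed
qed

lemma ray_match_rev:
  fixes A B :: "'a::semigroup_mult set"
  assumes finB: "finite B" and BA: "B \<subseteq> sgen A" and Y: "Y \<in> ray_sets (cayley_r B)"
    and eq: "reach_le (cayley_r A) = reach_le (cayley_r B)"
  shows "\<exists>X\<in>ray_sets (cayley_r A). reach_le (cayley_r B) X Y \<and> reach_le (cayley_r B) Y X"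
proof -
  obtain X where "X \<in> ray_sets (cayley_r A)" "reach_le (cayley_r A) Y X" "reach_le (cayley_r A) X Y"
    using ray_match[OF finB BA Y] by blast
  then show ?thesis using eq by auto
qed

theorem mainTheorem6:
  fixes A B :: "'a::semigroup_mult set"
  assumes "finite A" and "sgen A = UNIV"
      and "finite B" and "sgen B = UNIV"
  shows "end_poset_iso (cayley_r A) (cayley_r B)"
proof -
  have eq: "reach_le (cayley_r A) = reach_le (cayley_r B)"
    using transfer[of A B] transfer[of B A] assms by (intro ext iffI) auto
  show ?thesis
  proof (rule iso_abstract[OF eq])
    show "\<forall>X\<in>ray_sets (cayley_r A). \<exists>Y\<in>ray_sets (cayley_r B). reach_le (cayley_r B) X Y \<and> reach_le (cayley_r B) Y X"
      using ray_match[of A B] assms by auto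
    show "\<forall>Y\<in>ray_sets (cayley_r B). \<exists>X\<in>ray_sets (cayley_r A). reach_le (cayley_r B) X Y \<and> reach_le (cayley_r B) Y X"
      using ray_match_rev[of B A] assms eq by auto
  qed
qed

end
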